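(* Let $|\psi_{{\sf A}{\sf B}}\rangle\in\mathbb C^{d_{\sf A}}\otimes\mathbb C^{d_{\sf B}}$ be a unit vector and $\hat F_{\sf B}=\sum_i\alpha_i|\phi_i\rangle\langle\phi_i|^{\otimes2}$ with unit vectors $\phi_i\in\mathbb C^{d_{\sf B}}$ and $\alpha_i>0$ (acting on factors $2,4$). Define $\bar\omega_{{\sf A}|F_{\sf B}}=\mathrm{tr}_{\sf B}\big(S_{\sf A}\hat F_{\sf B}|\psi_{{\sf A}{\sf B}}\rangle\langle\psi_{{\sf A}{\sf B}}|^{\otimes2}\big)+\mathrm{tr}\big(|\psi_{{\sf A}{\sf B}}\rangle\langle\psi_{{\sf A}{\sf B}}|^{\otimes2}A_{\sf A}A_{\sf B}\big)\frac{\mathrm{tr}(\hat F_{\sf B})}{\mathrm{tr}(S_{\sf B})}\tilde S_{\sf A}$, and, when $\mathrm{tr}(\bar\omega_{{\sf A}|F_{\sf B}})>0$, the normalised conditional state $\tilde\omega_{{\sf A}|F_{\sf B}}=\bar\omega_{{\sf A}|F_{\sf B}}/\mathrm{tr}(\bar\omega_{{\sf A}|F_{\sf B}})$. Then $\tilde\omega_{{\sf A}|F_{\sf B}}$ belongs to the convex hull of $\{|\varphi\rangle\langle\varphi|^{\otimes2}:\varphi\in\mathbb C^{d_{\sf A}},\ \|\varphi\|=1\}$.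
   Context: $|\psi_{{\sf A}{\sf B}}\rangle^{\otimes2}$ is regarded as a vector in $\mathbb C^{d_{\sf A}}_1\otimes\mathbb C^{d_{\sf B}}_2\otimes\mathbb C^{d_{\sf A}}_3\otimes\mathbb C^{d_{\sf B}}_4$; $\mathrm{tr}_{\sf B}$ is the partial trace over factors $2,4$. $S_{\sf A}$, $A_{\sf A}$ are the projectors onto the symmetric and antisymmetric subspaces of $\mathbb C^{d_{\sf A}}_1\otimes\mathbb C^{d_{\sf A}}_3$; $S_{\sf B}$, $A_{\sf B}$ those of $\mathbb C^{d_{\sf B}}_2\otimes\mathbb C^{d_{\sf B}}_4$ (extended by identities where needed); $\tilde S_{\sf A}=S_{\sf A}/\mathrm{tr}S_{\sf A}$. *)

theory Defs
  imports "HOL-Analysis.Analysis"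
begin

text \<open>Finite-dimensional complex spaces are modelled as complex vectors indexed by
finite types: C^{d_A} = complex^'a, C^{d_B} = complex^'b.  The four-fold space
C^{d_A}_1 (x) C^{d_B}_2 (x) C^{d_A}_3 (x) C^{d_B}_4 is indexed by 'a * 'b * 'a * 'b.\<close>

type_synonym ('a, 'b) idx4 = "'a \<times> 'b \<times> 'a \<times> 'b"

definition msc :: "complex \<Rightarrow> complex^'n::finite^'m::finite \<Rightarrow> complex^'n^'m" where
  "msc c M = (\<chi> i j. c * M$i$j)"

definition proj :: "complex^'n::finite \<Rightarrow> complex^'n^'n" where
  "proj v = (\<chi> i j. v$i * cnj (v$j))"

definition vtensor :: "complex^'m::finite \<Rightarrow> complex^'n::finite \<Rightarrow> complex^('m \<times> 'n)" where
  "vtensor v w = vec_lambda (\<lambda>(i, j). v$i * w$j)"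

definition psi2 :: "complex^('a::finite \<times> 'b::finite) \<Rightarrow> complex^(('a, 'b) idx4)" where
  "psi2 \<psi> = vec_lambda (\<lambda>(a1, b2, a3, b4). \<psi>$(a1, b2) * \<psi>$(a3, b4))"

definition symP :: "complex^('c::finite \<times> 'c)^('c \<times> 'c)" where
  "symP = (vec_lambda (\<lambda>(i, j). vec_lambda (\<lambda>(i', j').
      ((if i = i' \<and> j = j' then 1 else 0) + (if i = j' \<and> j = i' then 1 else 0)) / 2)))"

definition asymP :: "complex^('c::finite \<times> 'c)^('c \<times> 'c)" where
  "asymP = (vec_lambda (\<lambda>(i, j). vec_lambda (\<lambda>(i', j').
      ((if i = i' \<and> j = j' then 1 else 0) - (if i = j' \<and> j = i' then 1 else 0)) / 2)))"

definition onA :: "complex^('a::finite \<times> 'a)^('a \<times> 'a) \<Rightarrow> complex^(('a, 'b::finite) idx4)^(('a, 'b) idx4)" where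
  "onA X = (vec_lambda (\<lambda>(a1, b2, a3, b4). vec_lambda (\<lambda>(a1', b2', a3', b4').
      X$(a1, a3)$(a1', a3') * (if b2 = b2' \<and> b4 = b4' then 1 else 0))))"

definition onB :: "complex^('b::finite \<times> 'b)^('b \<times> 'b) \<Rightarrow> complex^(('a::finite, 'b) idx4)^(('a, 'b) idx4)" where
  "onB Y = (vec_lambda (\<lambda>(a1, b2, a3, b4). vec_lambda (\<lambda>(a1', b2', a3', b4').
      Y$(b2, b4)$(b2', b4') * (if a1 = a1' \<and> a3 = a3' then 1 else 0))))"

definition trB :: "complex^(('a::finite, 'b::finite) idx4)^(('a, 'b) idx4) \<Rightarrow> complex^('a \<times> 'a)^('a \<times> 'a)" where
  "trB M = (vec_lambda (\<lambda>(a1, a3). vec_lambda (\<lambda>(a1', a3').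
      (\<Sum>b2\<in>UNIV. \<Sum>b4\<in>UNIV. M$(a1, b2, a3, b4)$(a1', b2, a3', b4)))))"

definition Fhat :: "'i set \<Rightarrow> ('i \<Rightarrow> real) \<Rightarrow> ('i \<Rightarrow> complex^'b::finite) \<Rightarrow> complex^('b \<times> 'b)^('b \<times> 'b)" where
  "Fhat I \<alpha> \<phi> = (\<Sum>i\<in>I. msc (complex_of_real (\<alpha> i)) (proj (vtensor (\<phi> i) (\<phi> i))))"

definition omega_bar :: "complex^('a::finite \<times> 'b::finite) \<Rightarrow> 'i set \<Rightarrow> ('i \<Rightarrow> real) \<Rightarrow> ('i \<Rightarrow> complex^'b)
    \<Rightarrow> complex^('a \<times> 'a)^('a \<times> 'a)" where
  "omega_bar \<psi> I \<alpha> \<phi> =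
     trB (onA symP ** onB (Fhat I \<alpha> \<phi>) ** proj (psi2 \<psi>))
     + msc (trace (proj (psi2 \<psi>) ** onA asymP ** onB asymP)
            * trace (Fhat I \<alpha> \<phi>) / trace (symP :: complex^('b \<times> 'b)^('b \<times> 'b)))
           (msc (1 / trace (symP :: complex^('a \<times> 'a)^('a \<times> 'a))) symP)"

definition omega_tilde :: "complex^('a::finite \<times> 'b::finite) \<Rightarrow> 'i set \<Rightarrow> ('i \<Rightarrow> real) \<Rightarrow> ('i \<Rightarrow> complex^'b)
    \<Rightarrow> complex^('a \<times> 'a)^('a \<times> 'a)" where
  "omega_tilde \<psi> I \<alpha> \<phi> = msc (1 / trace (omega_bar \<psi> I \<alpha> \<phi>)) (omega_bar \<psi> I \<alpha> \<phi>)"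

end

theory Submission
  imports Defs
begin



lemma msc_scaleR: "msc (complex_of_real r) M = r *\<^sub>R M"
  by (simp add: msc_def vec_eq_iff del: scaleR_conv_of_real) (simp add: scaleR_conv_of_real)

lemma sum4:
  fixes f :: "('a::finite \<times> 'b::finite \<times> 'a \<times> 'b) \<Rightarrow> 'c::comm_monoid_add"
  shows "(\<Sum>y\<in>UNIV. f y) = (\<Sum>x\<in>UNIV. \<Sum>z\<in>UNIV. f (fst x, fst z, snd x, snd z))"
proof -
  have "(\<Sum>x\<in>UNIV. \<Sum>z\<in>UNIV. f (fst x, fst z, snd x, snd z)) =
        (\<Sum>xz\<in>UNIV \<times> UNIV. f (fst (fst xz), fst (snd xz), snd (fst xz), snd (snd xz)))"
    by (simp add: sum.cartesian_product case_prod_beta)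
  also have "\<dots> = (\<Sum>y\<in>UNIV. f y)"
    by (rule sum.reindex_bij_witness[where i="\<lambda>(a1,b2,a3,b4). ((a1,a3),(b2,b4))"
          and j="\<lambda>xz. (fst (fst xz), fst (snd xz), snd (fst xz), snd (snd xz))"]) auto
  finally show ?thesis by simp
qed

lemma symP_entry0: "(symP :: complex^('c::finite \<times> 'c)^('c \<times> 'c))$(a,b)$(c,d) =
   ((if (c,d) = (a,b) then 1 else 0) + (if (c,d) = (b,a) then 1 else 0))/2"
  unfolding symP_def vec_lambda_beta prod.case
  apply (simp only: prod.inject)
  by (smt (verit))

lemma asymP_entry0: "(asymP :: complex^('c::finite \<times> 'c)^('c \<times> 'c))$(a,b)$(c,d) =
   ((if (c,d) = (a,b) then 1 else 0) - (if (c,d) = (b,a) then 1 else 0))/2"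
  unfolding asymP_def vec_lambda_beta prod.case
  apply (simp only: prod.inject)
  by (smt (verit))

lemma symP_entry: "(symP :: complex^('c::finite \<times> 'c)^('c \<times> 'c))$(a,b)$x =
   ((if x = (a,b) then 1 else 0) + (if x = (b,a) then 1 else 0))/2"
  by (cases x) (simp only: symP_entry0)

lemma asymP_entry: "(asymP :: complex^('c::finite \<times> 'c)^('c \<times> 'c))$(a,b)$x =
   ((if x = (a,b) then 1 else 0) - (if x = (b,a) then 1 else 0))/2"
  by (cases x) (simp only: asymP_entry0)

lemma ifmul: "(if x = p then 1 else 0) / 2 * (g x::complex) = (if p = x then g x / 2 else 0)"
  by simp
lemma symP_sum: "(\<Sum>x\<in>UNIV. (symP :: complex^('c::finite \<times> 'c)^('c \<times> 'c))$(a,b)$x * g x) = (g (a,b) + g (b,a))/2"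
  by (simp only: symP_entry add_divide_distrib distrib_right sum.distrib ifmul sum.delta sum.delta' finite UNIV_I if_True)
lemma asymP_sum: "(\<Sum>x\<in>UNIV. (asymP :: complex^('c::finite \<times> 'c)^('c \<times> 'c))$(a,b)$x * g x) = (g (a,b) - g (b,a))/2"
  by (simp only: asymP_entry diff_divide_distrib left_diff_distrib sum_subtractf ifmul sum.delta sum.delta' finite UNIV_I if_True)

lemma onAB_entry:
  "(onA X ** onB Y) $ (a1,b2,a3,b4) $ (c1,e2,c3,e4) = X$(a1,a3)$(c1,c3) * Y$(b2,b4)$(e2,e4)"
proof -
  have "(onA X ** onB Y) $ (a1,b2,a3,b4) $ (c1,e2,c3,e4) =
     (\<Sum>x\<in>UNIV. \<Sum>z\<in>UNIV. (if x = (c1,c3) then X$(a1,a3)$x else 0) * (if z = (b2,b4) then Y$z$(e2,e4) else 0))"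
    unfolding matrix_matrix_mult_def
    apply (simp add: sum4[where f="\<lambda>y. onA X $ (a1, b2, a3, b4) $ y * onB Y $ y $ (c1, e2, c3, e4)"])
    apply (intro sum.cong refl)
    apply (auto simp: onA_def onB_def)
    done
  also have "\<dots> = X$(a1,a3)$(c1,c3) * Y$(b2,b4)$(e2,e4)"
    unfolding sum_product[symmetric] by simp
  finally show ?thesis .
qed

lemma mult_proj: "(M ** proj v)$p$q = (\<Sum>y\<in>UNIV. M$p$y * v$y) * cnj (v$q)"
  by (simp add: matrix_matrix_mult_def proj_def sum_distrib_right mult.assoc)

lemma psi2_entry: "psi2 \<psi> $ (c1,e2,c3,e4) = \<psi>$(c1,e2) * \<psi>$(c3,e4)"
  by (simp add: psi2_def)

lemma proj_vt_entry: "proj (vtensor u w) $ (i,j) $ z = u$i * w$j * cnj (u$(fst z) * w$(snd z))"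
  by (cases z) (simp add: proj_def vtensor_def)

definition chi :: "complex^('a::finite \<times> 'b::finite) \<Rightarrow> complex^'b \<Rightarrow> complex^'a" where
  "chi \<psi> \<phi> = (\<chi> a. \<Sum>b\<in>UNIV. \<psi>$(a,b) * cnj (\<phi>$b))"

lemma T1_entry:
  "trB (onA symP ** onB F ** proj (psi2 \<psi>)) $ (a1,a3) $ (a1',a3') =
   (\<Sum>b2\<in>UNIV. \<Sum>b4\<in>UNIV. (\<Sum>y\<in>UNIV. \<Sum>z\<in>UNIV. symP$(a1,a3)$y * F$(b2,b4)$z * (\<psi>$(fst y, fst z) * \<psi>$(snd y, snd z)))
       * cnj (\<psi>$(a1',b2) * \<psi>$(a3',b4)))"
  unfolding trB_def vec_lambda_beta prod.case mult_proj
  by (simp add: sum4[where f="\<lambda>y. (onA symP ** onB F) $ (a1, _, a3, _) $ y * psi2 \<psi> $ y"] onAB_entry psi2_entry mult.assoc)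

lemma u_sum:
  "(\<Sum>z\<in>UNIV. cnj (\<phi>$(fst z) * \<phi>$(snd z)) * (\<psi>$(y1, fst z) * \<psi>$(y3, snd z))) = chi \<psi> \<phi> $ y1 * chi \<psi> \<phi> $ y3"
proof -
  have "chi \<psi> \<phi> $ y1 * chi \<psi> \<phi> $ y3 = (\<Sum>b\<in>UNIV. \<Sum>b'\<in>UNIV. (\<psi>$(y1,b) * cnj (\<phi>$b)) * (\<psi>$(y3,b') * cnj (\<phi>$b')))"
    by (simp add: chi_def sum_product)
  also have "\<dots> = (\<Sum>z\<in>UNIV \<times> UNIV. (\<psi>$(y1,fst z) * cnj (\<phi>$(fst z))) * (\<psi>$(y3,snd z) * cnj (\<phi>$(snd z))))"
    by (simp add: sum.cartesian_product case_prod_beta)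
  also have "\<dots> = (\<Sum>z\<in>UNIV. cnj (\<phi>$(fst z) * \<phi>$(snd z)) * (\<psi>$(y1, fst z) * \<psi>$(y3, snd z)))"
    by (simp add: UNIV_Times_UNIV mult_ac)
  finally show ?thesis by simp
qed

lemma T1_rank1:
  "trB (onA symP ** onB (proj (vtensor \<phi> \<phi>)) ** proj (psi2 \<psi>)) = proj (vtensor (chi \<psi> \<phi>) (chi \<psi> \<phi>))"
proof -
  { fix a1 a3 a1' a3'
    let ?c = "chi \<psi> \<phi>"
    have inner: "(\<Sum>y\<in>UNIV. \<Sum>z\<in>UNIV. symP$(a1,a3)$y * proj (vtensor \<phi> \<phi>)$(b2,b4)$z * (\<psi>$(fst y, fst z) * \<psi>$(snd y, snd z)))
       = \<phi>$b2 * \<phi>$b4 * (?c$a1 * ?c$a3)" for b2 b4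
    proof -
      have "(\<Sum>y\<in>UNIV. \<Sum>z\<in>UNIV. symP$(a1,a3)$y * proj (vtensor \<phi> \<phi>)$(b2,b4)$z * (\<psi>$(fst y, fst z) * \<psi>$(snd y, snd z)))
         = (\<Sum>y\<in>UNIV. symP$(a1,a3)$y * (\<phi>$b2 * \<phi>$b4 * (?c$(fst y) * ?c$(snd y))))"
        by (simp add: proj_vt_entry u_sum[symmetric] sum_distrib_left mult_ac)
      also have "\<dots> = \<phi>$b2 * \<phi>$b4 * (?c$a1 * ?c$a3)"
        by (subst symP_sum) (simp add: mult_ac)
      finally show ?thesis .
    qed
    have "trB (onA symP ** onB (proj (vtensor \<phi> \<phi>)) ** proj (psi2 \<psi>)) $ (a1,a3) $ (a1',a3')
       = (\<Sum>b2\<in>UNIV. \<Sum>b4\<in>UNIV. (\<phi>$b2 * cnj (\<psi>$(a1',b2))) * (\<phi>$b4 * cnj (\<psi>$(a3',b4)))) * (?c$a1 * ?c$a3)"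
      unfolding T1_entry inner by (simp add: sum_distrib_left sum_distrib_right mult_ac)
    also have "\<dots> = (cnj (?c$a1') * cnj (?c$a3')) * (?c$a1 * ?c$a3)"
    proof -
      have cj: "cnj (?c$x) = (\<Sum>b\<in>UNIV. \<phi>$b * cnj (\<psi>$(x,b)))" for x
        by (simp add: chi_def mult.commute)
      show ?thesis unfolding cj sum_product by simp
    qed
    also have "\<dots> = proj (vtensor ?c ?c) $ (a1,a3) $ (a1',a3')"
      by (simp add: proj_vt_entry mult_ac)
    finally have "trB (onA symP ** onB (proj (vtensor \<phi> \<phi>)) ** proj (psi2 \<psi>)) $ (a1,a3) $ (a1',a3') = proj (vtensor ?c ?c) $ (a1,a3) $ (a1',a3')" .
  }
  then show ?thesis by (simp add: vec_eq_iff)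
qed

definition TT :: "complex^('a::finite \<times> 'b::finite) \<Rightarrow> complex^('b \<times> 'b)^('b \<times> 'b) \<Rightarrow> complex^('a \<times> 'a)^('a \<times> 'a)" where
  "TT \<psi> F = trB (onA symP ** onB F ** proj (psi2 \<psi>))"

lemma TT_add: "TT \<psi> (F + G) = TT \<psi> F + TT \<psi> G"
  unfolding vec_eq_iff TT_def by (simp add: split_paired_All T1_entry distrib_left distrib_right sum.distrib)

lemma TT_zero: "TT \<psi> 0 = 0"
  unfolding vec_eq_iff TT_def by (simp add: split_paired_All T1_entry)

lemma TT_msc: "TT \<psi> (msc c F) = msc c (TT \<psi> F)"
  unfolding vec_eq_iff TT_def by (simp add: split_paired_All T1_entry msc_def sum_distrib_left mult_ac)

lemma TT_sum: "finite I \<Longrightarrow> TT \<psi> (\<Sum>i\<in>I. f i) = (\<Sum>i\<in>I. TT \<psi> (f i))"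
  by (induction I rule: finite_induct) (simp_all add: TT_zero TT_add)

lemma TT_Fhat: "finite I \<Longrightarrow> trB (onA symP ** onB (Fhat I \<alpha> \<phi>) ** proj (psi2 \<psi>)) =
   (\<Sum>i\<in>I. \<alpha> i *\<^sub>R proj (vtensor (chi \<psi> (\<phi> i)) (chi \<psi> (\<phi> i))))"
  unfolding TT_def[symmetric] Fhat_def
  by (simp add: TT_sum TT_msc msc_scaleR[symmetric]) (simp add: TT_def T1_rank1)

definition G4 :: "complex set" where "G4 = {1, \<i>, -1, -\<i>}"

definition ZZ :: "('a::finite \<Rightarrow> complex) set" where "ZZ = {z. \<forall>a. z a \<in> G4}"

lemma finite_ZZ: "finite (ZZ :: ('a::finite \<Rightarrow> complex) set)"
proof -
  have "ZZ = (Pi\<^sub>E (UNIV::'a set) (\<lambda>_. G4))" by (auto simp: ZZ_def PiE_UNIV_domain Pi_def)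
  moreover have "finite (Pi\<^sub>E (UNIV::'a set) (\<lambda>_. G4))" by (rule finite_PiE) (simp_all add: G4_def)
  ultimately show ?thesis by simp
qed

lemma ZZ_ne: "(\<lambda>_. 1) \<in> (ZZ :: ('a::finite \<Rightarrow> complex) set)"
  by (simp add: ZZ_def G4_def)

lemma G4_unit: "x \<in> G4 \<Longrightarrow> x * cnj x = 1"
  by (auto simp: G4_def)

lemma G4_mult: "x \<in> G4 \<Longrightarrow> \<i> * x \<in> G4" "x \<in> G4 \<Longrightarrow> -\<i> * x \<in> G4"
  by (auto simp: G4_def)

lemma ZZ_shift: "(\<Sum>z\<in>ZZ. f z) = (\<Sum>z\<in>ZZ. f (z(m := \<i> * z m)))"
  by (rule sum.reindex_bij_witness[where j="\<lambda>z. z(m := -\<i> * z m)" and i="\<lambda>z. z(m := \<i> * z m)"])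
     (auto simp: ZZ_def G4_def fun_eq_iff)

definition wfac :: "'a \<Rightarrow> 'a \<Rightarrow> complex" where "wfac m x = (if x = m then \<i> else 1)"

lemma shift_val: "(z(m := \<i> * z m)) x = wfac m x * z x"
  by (simp add: wfac_def)

lemma Zsum_w: "(\<Sum>z\<in>ZZ. z i * z j * cnj (z k * z l)) =
   (wfac m i * wfac m j * cnj (wfac m k * wfac m l)) * (\<Sum>z\<in>ZZ. z i * z j * cnj (z k * z l))"
  apply (subst ZZ_shift[where m=m])
  apply (simp only: shift_val sum_distrib_left)
  apply (simp add: mult_ac)
  done

lemma Zsum: "(\<Sum>z\<in>(ZZ::('a::finite \<Rightarrow> complex) set). z i * z j * cnj (z k * z l)) =
   (if (i = k \<and> j = l) \<or> (i = l \<and> j = k) then of_nat (card (ZZ::('a \<Rightarrow> complex) set)) else 0)"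
proof (cases "(i = k \<and> j = l) \<or> (i = l \<and> j = k)")
  case True
  have "z i * z j * cnj (z k * z l) = 1" if "z \<in> ZZ" for z :: "'a \<Rightarrow> complex"
  proof -
    have u: "z x * cnj (z x) = 1" for x using that by (simp add: ZZ_def G4_unit)
    have "z i * z j * cnj (z k * z l) = (z i * cnj (z i)) * (z j * cnj (z j))"
      using True by (auto simp: mult_ac)
    then show ?thesis by (simp add: u)
  qed
  then show ?thesis using True by simp
next
  case False
  define S where "S = (\<Sum>z\<in>(ZZ::('a::finite \<Rightarrow> complex) set). z i * z j * cnj (z k * z l))"
  have w: "S = (wfac m i * wfac m j * cnj (wfac m k * wfac m l)) * S" for m
    unfolding S_def by (rule Zsum_w)
  have "wfac i i * wfac i j * cnj (wfac i k * wfac i l) \<noteq> 1 \<or> wfac j i * wfac j j * cnj (wfac j k * wfac j l) \<noteq> 1"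
    using False by (auto simp: wfac_def split: if_splits)
  then have "S = 0"
  proof
    assume "wfac i i * wfac i j * cnj (wfac i k * wfac i l) \<noteq> 1"
    then show "S = 0" using w[of i]
      by (metis mult_cancel_right2)
  next
    assume "wfac j i * wfac j j * cnj (wfac j k * wfac j l) \<noteq> 1"
    then show "S = 0" using w[of j]
      by (metis mult_cancel_right2)
  qed
  then show ?thesis unfolding S_def[symmetric] if_not_P[OF False] .
qed

lemma norm_sq: "complex_of_real ((norm u)^2) = (\<Sum>i\<in>UNIV. u$i * cnj (u$i))"
proof -
  have "(norm u)^2 = (\<Sum>i\<in>UNIV. (norm (u$i))^2)"
    unfolding norm_vec_def L2_set_def by (simp add: sum_nonneg)
  then have "complex_of_real ((norm u)^2) = complex_of_real (\<Sum>i\<in>UNIV. (norm (u$i))^2)" by simp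
  also have "\<dots> = (\<Sum>i\<in>UNIV. u$i * cnj (u$i))" by (simp only: of_real_sum complex_norm_square)
  finally show ?thesis .
qed

lemma trace_symP: "trace (symP :: complex^('c::finite \<times> 'c)^('c \<times> 'c)) = of_nat (CARD('c) * CARD('c) + CARD('c)) / 2"
proof -
  have "trace (symP :: complex^('c::finite \<times> 'c)^('c \<times> 'c)) = (\<Sum>x\<in>(UNIV::'c set) \<times> (UNIV::'c set). (symP :: complex^('c \<times> 'c)^('c \<times> 'c)) $ x $ x)"
    by (simp add: trace_def UNIV_Times_UNIV)
  also have "\<dots> = (\<Sum>x\<in>(UNIV::'c set) \<times> (UNIV::'c set). (1 + (if fst x = snd x then 1 else 0))/2)"
    by (rule sum.cong[OF refl], clarify, simp only: symP_entry0 prod.inject simp_thms if_True fst_conv snd_conv) (smt (verit))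
  also have "\<dots> = (\<Sum>a\<in>(UNIV::'c set). \<Sum>b\<in>UNIV. (1 + (if a = b then 1 else 0))/2)"
    by (simp add: sum.cartesian_product case_prod_beta)
  also have "\<dots> = of_nat (CARD('c) * CARD('c) + CARD('c)) / 2"
    by (simp add: add_divide_distrib sum.distrib sum_divide_distrib[symmetric] sum.delta)
       (simp add: distrib_left times_divide_eq_right)
  finally show ?thesis .
qed

definition uz :: "('a::finite \<Rightarrow> complex) \<Rightarrow> complex^'a" where
  "uz z = (\<chi> a. z a / of_real (sqrt (real CARD('a))))"

lemma ss: "of_real (sqrt (real CARD('a::finite))) * of_real (sqrt (real CARD('a))) = (of_nat CARD('a) :: complex)"
proof -
  have "sqrt (real CARD('a)) * sqrt (real CARD('a)) = real CARD('a)" by simp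
  then show ?thesis by (simp only: of_real_mult[symmetric] of_real_of_nat_eq)
qed

lemma norm_uz: "z \<in> ZZ \<Longrightarrow> norm (uz z :: complex^'a::finite) = 1"
proof -
  assume z: "z \<in> ZZ"
  let ?s = "of_real (sqrt (real CARD('a))) :: complex"
  have "(\<Sum>i\<in>UNIV. uz z$i * cnj (uz z$i)) = (\<Sum>i\<in>(UNIV::'a set). 1 / of_nat CARD('a))"
  proof (rule sum.cong[OF refl])
    fix i :: 'a
    have "uz z$i * cnj (uz z$i) = (z i * cnj (z i)) / (?s * ?s)"
      by (simp add: uz_def)
    then show "uz z$i * cnj (uz z$i) = 1 / of_nat CARD('a)"
      using z by (simp add: ZZ_def G4_unit ss)
  qed
  also have "\<dots> = 1" by simp
  finally have "complex_of_real ((norm (uz z))^2) = 1" by (simp only: norm_sq)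
  then have "(norm (uz z))^2 = 1" by (metis of_real_eq_1_iff)
  then show ?thesis using norm_ge_zero[of "uz z"] by (auto simp: power2_eq_1_iff)
qed

lemma uz_entry: "proj (vtensor (uz z :: complex^'a::finite) (uz z)) $ (i,j) $ (k,l) =
   z i * z j * cnj (z k * z l) / of_nat (CARD('a) * CARD('a))"
proof -
  let ?s = "of_real (sqrt (real CARD('a))) :: complex"
  have "proj (vtensor (uz z) (uz z)) $ (i,j) $ (k,l) = z i * z j * cnj (z k * z l) / ((?s * ?s) * (?s * ?s))"
    by (simp add: proj_vt_entry uz_def)
  then show ?thesis by (simp only: ss of_nat_mult)
qed

lemma axis_entry: "proj (vtensor (axis a 1) (axis a 1)) $ (i,j) $ (k,l) =
   (if i = a \<and> j = a \<and> k = a \<and> l = a then 1 else (0::complex))"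
  by (simp add: proj_vt_entry axis_def)

lemma unit_of_sq: "(\<Sum>i\<in>UNIV. u$i * cnj (u$i)) = 1 \<Longrightarrow> norm (u :: complex^'n::finite) = 1"
proof -
  assume "(\<Sum>i\<in>UNIV. u$i * cnj (u$i)) = 1"
  then have "complex_of_real ((norm u)^2) = 1" by (simp only: norm_sq)
  then have "(norm u)^2 = 1" by (metis of_real_eq_1_iff)
  then show ?thesis using norm_ge_zero[of u] by (auto simp: power2_eq_1_iff)
qed

lemma norm_axis_c: "norm (axis a (1::complex) :: complex^'n::finite) = 1"
  by (rule unit_of_sq) (simp add: axis_def if_distrib sum.delta cong: if_cong)

definition MM :: "complex^('a::finite \<times> 'a)^('a \<times> 'a)" where
  "MM = (\<Sum>z\<in>ZZ. (1 / real (card (ZZ::('a \<Rightarrow> complex) set))) *\<^sub>R proj (vtensor (uz z :: complex^'a) (uz z)))"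

definition DD :: "complex^('a::finite \<times> 'a)^('a \<times> 'a)" where
  "DD = (\<Sum>a\<in>UNIV. (1 / real CARD('a)) *\<^sub>R proj (vtensor (axis a 1 :: complex^'a) (axis a 1)))"

lemma card_ZZ: "card (ZZ::('a::finite \<Rightarrow> complex) set) > 0"
  using finite_ZZ ZZ_ne card_gt_0_iff by blast

lemma MM_hull: "(MM :: complex^('a::finite \<times> 'a)^('a \<times> 'a)) \<in> convex hull {proj (vtensor \<phi>' \<phi>') | \<phi>' :: complex^'a. norm \<phi>' = 1}"
  unfolding MM_def
proof (rule convex_sum[OF finite_ZZ convex_convex_hull])
  show "(\<Sum>i\<in>(ZZ::('a \<Rightarrow> complex) set). 1 / real (card (ZZ::('a \<Rightarrow> complex) set))) = 1"
    using card_ZZ[where 'a='a] by simp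
  show "\<And>i. i \<in> ZZ \<Longrightarrow> 0 \<le> 1 / real (card (ZZ::('a \<Rightarrow> complex) set))" by simp
  show "\<And>i. i \<in> ZZ \<Longrightarrow> proj (vtensor (uz i :: complex^'a) (uz i)) \<in> convex hull {proj (vtensor \<phi>' \<phi>') | \<phi>' :: complex^'a. norm \<phi>' = 1}"
    by (rule hull_inc) (auto intro: norm_uz)
qed

lemma DD_hull: "(DD :: complex^('a::finite \<times> 'a)^('a \<times> 'a)) \<in> convex hull {proj (vtensor \<phi>' \<phi>') | \<phi>' :: complex^'a. norm \<phi>' = 1}"
  unfolding DD_def
proof (rule convex_sum[OF finite convex_convex_hull])
  show "(\<Sum>i\<in>(UNIV::'a set). 1 / real CARD('a)) = 1" by simp
  show "\<And>i. i \<in> UNIV \<Longrightarrow> 0 \<le> 1 / real CARD('a)" by simp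
  show "\<And>i. i \<in> UNIV \<Longrightarrow> proj (vtensor (axis i 1 :: complex^'a) (axis i 1)) \<in> convex hull {proj (vtensor \<phi>' \<phi>') | \<phi>' :: complex^'a. norm \<phi>' = 1}"
    by (rule hull_inc) (auto intro: norm_axis_c)
qed

lemma MM_entry: "(MM :: complex^('a::finite \<times> 'a)^('a \<times> 'a)) $ (i,j) $ (k,l) =
   (if (i = k \<and> j = l) \<or> (i = l \<and> j = k) then 1 else 0) / of_nat (CARD('a) * CARD('a))"
proof -
  have "(MM :: complex^('a::finite \<times> 'a)^('a \<times> 'a)) $ (i,j) $ (k,l) =
     (1 / of_nat (card (ZZ::('a \<Rightarrow> complex) set))) * (\<Sum>z\<in>(ZZ::('a \<Rightarrow> complex) set). z i * z j * cnj (z k * z l)) / of_nat (CARD('a) * CARD('a))"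
    unfolding MM_def sum_component vector_scaleR_component uz_entry
    by (simp add: scaleR_conv_of_real sum_distrib_left sum_divide_distrib)
  also have "\<dots> = (if (i = k \<and> j = l) \<or> (i = l \<and> j = k) then 1 else 0) / of_nat (CARD('a) * CARD('a))"
    using card_ZZ[where 'a='a] by (simp only: Zsum) simp
  finally show ?thesis .
qed

lemma DD_entry: "(DD :: complex^('a::finite \<times> 'a)^('a \<times> 'a)) $ (i,j) $ (k,l) =
   (if i = j \<and> j = k \<and> k = l then 1 else 0) / of_nat CARD('a)"
proof -
  have "(DD :: complex^('a::finite \<times> 'a)^('a \<times> 'a)) $ (i,j) $ (k,l) =
     (\<Sum>a\<in>UNIV. if a = i then (if i = j \<and> j = k \<and> k = l then 1 else 0) / of_nat CARD('a) else 0)"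
    unfolding DD_def sum_component vector_scaleR_component axis_entry
    by (rule sum.cong) (auto simp: scaleR_conv_of_real)
  then show ?thesis by (simp only: sum.delta finite UNIV_I if_True)
qed

lemma Sn_entry_eq0:
  fixes n :: complex
  assumes n: "n \<noteq> 0" "n + 1 \<noteq> 0"
    and C: "C = (P1 \<or> P2)" and A: "A = (P1 \<and> P2)"
  shows "(1 / ((n * n + n) / 2)) * (((if P1 then 1 else 0) + (if P2 then 1 else 0)) / 2)
    = (n / (n + 1)) * ((if C then 1 else 0) / (n * n))
      + (1 / (n + 1)) * ((if A then 1 else 0) / n)"
proof -
  have nn: "n * n + n = n * (n + 1)" by (simp add: algebra_simps)
  have nz: "n * (n + 1) \<noteq> 0" using n by simp
  show ?thesis
    unfolding C A nn
    apply (cases P1; cases P2)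
    using n nz apply (simp_all add: field_simps)
    done
qed

lemma Sn_entry_eq:
  fixes n :: complex and i j k l :: 'a
  assumes n: "n \<noteq> 0" "n + 1 \<noteq> 0"
  shows "(1 / ((n * n + n) / 2)) * (((if (k,l) = (i,j) then 1 else 0) + (if (k,l) = (j,i) then 1 else 0)) / 2)
    = (n / (n + 1)) * ((if (i = k \<and> j = l) \<or> (i = l \<and> j = k) then 1 else 0) / (n * n))
      + (1 / (n + 1)) * ((if i = j \<and> j = k \<and> k = l then 1 else 0) / n)"
  by (rule Sn_entry_eq0[OF n]) auto

lemma Sn_decomp: "msc (1 / trace (symP :: complex^('a::finite \<times> 'a)^('a \<times> 'a))) (symP :: complex^('a \<times> 'a)^('a \<times> 'a)) =
   (real CARD('a) / (real CARD('a) + 1)) *\<^sub>R MM + (1 / (real CARD('a) + 1)) *\<^sub>R DD"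
proof -
  have n: "(of_nat CARD('a) :: complex) \<noteq> 0" "(of_nat CARD('a) :: complex) + 1 \<noteq> 0"
    by simp (metis of_nat_Suc of_nat_eq_0_iff add.commute nat.distinct(1))
  show ?thesis
    apply (rule vec_eq_iff[THEN iffD2], intro allI, rule vec_eq_iff[THEN iffD2], intro allI)
    subgoal for x y
      apply (cases x; cases y)
      apply (simp only: msc_def vec_lambda_beta vector_add_component vector_scaleR_component MM_entry DD_entry
        symP_entry0 trace_symP)
      apply (simp only: scaleR_conv_of_real of_nat_mult of_nat_add of_real_divide of_real_of_nat_eq of_real_add of_real_1)
      by (rule Sn_entry_eq[OF n])
    done
qed

lemma Sn_hull: "msc (1 / trace (symP :: complex^('a::finite \<times> 'a)^('a \<times> 'a))) (symP :: complex^('a \<times> 'a)^('a \<times> 'a))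
   \<in> convex hull {proj (vtensor \<phi>' \<phi>') | \<phi>' :: complex^'a. norm \<phi>' = 1}"
  unfolding Sn_decomp
  by (rule convexD[OF convex_convex_hull MM_hull DD_hull]) (auto simp: divide_simps)

lemma pos_trace:
  fixes X :: "complex^'n::finite^'n"
  assumes idem: "X ** X = X" and sym: "\<And>p q. X$p$q = X$q$p" and re: "\<And>p q. cnj (X$p$q) = X$p$q"
  shows "trace (proj v ** X) = of_real (\<Sum>z\<in>UNIV. (cmod ((X *v v)$z))^2)"
proof -
  have XX: "X$q$p = (\<Sum>z\<in>UNIV. X$q$z * X$z$p)" for p q
  proof -
    have "X$q$p = (X ** X)$q$p" by (simp add: idem)
    then show ?thesis by (simp add: matrix_matrix_mult_def)
  qed
  have "trace (proj v ** X) = (\<Sum>p\<in>UNIV. \<Sum>q\<in>UNIV. (v$p * cnj (v$q)) * X$q$p)"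
    by (simp add: trace_def matrix_matrix_mult_def proj_def)
  also have "\<dots> = (\<Sum>p\<in>UNIV. \<Sum>q\<in>UNIV. \<Sum>z\<in>UNIV. (v$p * cnj (v$q)) * (X$q$z * X$z$p))"
    by (subst XX) (simp add: sum_distrib_left)
  also have "\<dots> = (\<Sum>z\<in>UNIV. \<Sum>p\<in>UNIV. \<Sum>q\<in>UNIV. (X$z$p * v$p) * (X$q$z * cnj (v$q)))"
  proof -
    have "(\<Sum>p\<in>UNIV. \<Sum>q\<in>UNIV. \<Sum>z\<in>UNIV. (v$p * cnj (v$q)) * (X$q$z * X$z$p))
        = (\<Sum>p\<in>UNIV. \<Sum>z\<in>UNIV. \<Sum>q\<in>UNIV. (v$p * cnj (v$q)) * (X$q$z * X$z$p))"
      by (rule sum.cong[OF refl], rule sum.swap)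
    also have "\<dots> = (\<Sum>z\<in>UNIV. \<Sum>p\<in>UNIV. \<Sum>q\<in>UNIV. (v$p * cnj (v$q)) * (X$q$z * X$z$p))"
      by (rule sum.swap)
    finally show ?thesis by (simp add: mult_ac)
  qed
  also have "\<dots> = (\<Sum>z\<in>UNIV. (X *v v)$z * cnj ((X *v v)$z))"
  proof (rule sum.cong[OF refl])
    fix z
    have "cnj ((X *v v)$z) = (\<Sum>q\<in>UNIV. X$q$z * cnj (v$q))"
      by (simp add: matrix_vector_mult_def re sym)
    then show "(\<Sum>p\<in>UNIV. \<Sum>q\<in>UNIV. (X$z$p * v$p) * (X$q$z * cnj (v$q))) = (X *v v)$z * cnj ((X *v v)$z)"
      by (simp add: matrix_vector_mult_def sum_product)
  qed
  also have "\<dots> = of_real (\<Sum>z\<in>UNIV. (cmod ((X *v v)$z))^2)"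
    by (simp only: of_real_sum complex_norm_square)
  finally show ?thesis .
qed

lemma asym_sym: "(asymP :: complex^('c::finite \<times> 'c)^('c \<times> 'c))$x$y = (asymP :: complex^('c \<times> 'c)^('c \<times> 'c))$y$x"
  by (cases x; cases y) (simp only: asymP_entry0 prod.inject, smt (verit))

lemma asym_real: "cnj ((asymP :: complex^('c::finite \<times> 'c)^('c \<times> 'c))$x$y) = (asymP :: complex^('c \<times> 'c)^('c \<times> 'c))$x$y"
  by (cases x; cases y) (simp only: asymP_entry0 complex_cnj_diff complex_cnj_divide complex_cnj_one complex_cnj_zero
        complex_cnj_numeral if_distrib[of cnj])

lemma asym_anti: "(asymP :: complex^('c::finite \<times> 'c)^('c \<times> 'c))$(b,a)$x = - (asymP :: complex^('c \<times> 'c)^('c \<times> 'c))$(a,b)$x"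
  by (simp only: asymP_entry minus_divide_left minus_diff_eq)

lemma asym_idem_sum: "(\<Sum>x\<in>UNIV. (asymP :: complex^('c::finite \<times> 'c)^('c \<times> 'c))$(a,b)$x * (asymP :: complex^('c \<times> 'c)^('c \<times> 'c))$x$c)
   = (asymP :: complex^('c \<times> 'c)^('c \<times> 'c))$(a,b)$c"
  by (simp only: asymP_sum asym_anti[where a=a and b=b and x=c] diff_minus_eq_add) simp

lemma mm_entry: "(M ** N)$p$q = (\<Sum>k\<in>UNIV. M$p$k * N$k$q)"
  by (simp add: matrix_matrix_mult_def)

lemma XA_sym: "(onA asymP ** onB asymP :: complex^(('a::finite,'b::finite) idx4)^(('a,'b) idx4))$p$q = (onA asymP ** onB asymP :: complex^(('a,'b) idx4)^(('a,'b) idx4))$q$p"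
proof -
  obtain a1 b2 a3 b4 where p: "p = (a1,b2,a3,b4)" by (cases p rule: prod_cases4)
  obtain c1 e2 c3 e4 where q: "q = (c1,e2,c3,e4)" by (cases q rule: prod_cases4)
  show ?thesis unfolding p q onAB_entry
    using asym_sym[of "(a1,a3)" "(c1,c3)"] asym_sym[of "(b2,b4)" "(e2,e4)"] by simp
qed

lemma XA_real: "cnj ((onA asymP ** onB asymP :: complex^(('a::finite,'b::finite) idx4)^(('a,'b) idx4))$p$q) = (onA asymP ** onB asymP :: complex^(('a,'b) idx4)^(('a,'b) idx4))$p$q"
proof -
  obtain a1 b2 a3 b4 where p: "p = (a1,b2,a3,b4)" by (cases p rule: prod_cases4)
  obtain c1 e2 c3 e4 where q: "q = (c1,e2,c3,e4)" by (cases q rule: prod_cases4)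
  show ?thesis unfolding p q onAB_entry complex_cnj_mult asym_real ..
qed

lemma XA_idem: "(onA asymP ** onB asymP :: complex^(('a::finite,'b::finite) idx4)^(('a,'b) idx4)) ** (onA asymP ** onB asymP) = onA asymP ** onB asymP"
proof (rule vec_eq_iff[THEN iffD2], intro allI, rule vec_eq_iff[THEN iffD2], intro allI)
  fix p q :: "('a,'b) idx4"
  obtain a1 b2 a3 b4 where p: "p = (a1,b2,a3,b4)" by (cases p rule: prod_cases4)
  obtain c1 e2 c3 e4 where q: "q = (c1,e2,c3,e4)" by (cases q rule: prod_cases4)
  let ?A = "asymP :: complex^('a \<times> 'a)^('a \<times> 'a)"
  let ?B = "asymP :: complex^('b \<times> 'b)^('b \<times> 'b)"
  have "((onA ?A ** onB ?B) ** (onA ?A ** onB ?B)) $ p $ q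
     = (\<Sum>x\<in>UNIV. \<Sum>z\<in>UNIV. (?A$(a1,a3)$x * ?A$x$(c1,c3)) * (?B$(b2,b4)$z * ?B$z$(e2,e4)))"
    unfolding p q mm_entry[of "onA ?A ** onB ?B"]
    apply (subst sum4)
    apply (simp only: onAB_entry prod.collapse)
    apply (simp only: mult_ac)
    done
  also have "\<dots> = ?A$(a1,a3)$(c1,c3) * ?B$(b2,b4)$(e2,e4)"
    by (simp only: sum_product[symmetric] asym_idem_sum)
  also have "\<dots> = (onA ?A ** onB ?B) $ p $ q"
    unfolding p q onAB_entry ..
  finally show "((onA ?A ** onB ?B) ** (onA ?A ** onB ?B)) $ p $ q = (onA ?A ** onB ?B) $ p $ q" .
qed

lemma coef_nonneg: "\<exists>r\<ge>0. trace (proj (psi2 \<psi>) ** onA asymP ** onB asymP :: complex^(('a::finite,'b::finite) idx4)^(('a,'b) idx4)) = of_real r"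
proof -
  have "trace (proj (psi2 \<psi>) ** onA asymP ** onB asymP :: complex^(('a::finite,'b::finite) idx4)^(('a,'b) idx4))
      = trace (proj (psi2 \<psi>) ** (onA asymP ** onB asymP :: complex^(('a::finite,'b::finite) idx4)^(('a,'b) idx4)))"
    by (simp add: matrix_mul_assoc)
  also have "\<dots> = of_real (\<Sum>z\<in>UNIV. (cmod (((onA asymP ** onB asymP :: complex^(('a::finite,'b::finite) idx4)^(('a,'b) idx4)) *v psi2 \<psi>)$z))^2)"
    by (rule pos_trace[OF XA_idem XA_sym XA_real])
  finally show ?thesis by (intro exI[of _ "\<Sum>z\<in>UNIV. (cmod (((onA asymP ** onB asymP :: complex^(('a::finite,'b::finite) idx4)^(('a,'b) idx4)) *v psi2 \<psi>)$z))^2"]) (simp add: sum_nonneg)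
qed

lemma trace_proj_vt: "trace (proj (vtensor u u)) = (\<Sum>i\<in>UNIV. u$i * cnj (u$i))^2"
proof -
  have "trace (proj (vtensor u u)) = (\<Sum>x\<in>UNIV \<times> UNIV. proj (vtensor u u) $ x $ x)"
    by (simp add: trace_def UNIV_Times_UNIV)
  also have "\<dots> = (\<Sum>i\<in>UNIV. \<Sum>j\<in>UNIV. (u$i * cnj (u$i)) * (u$j * cnj (u$j)))"
    by (simp add: sum.cartesian_product proj_def vtensor_def case_prod_beta mult_ac)
  also have "\<dots> = (\<Sum>i\<in>UNIV. u$i * cnj (u$i))^2"
    by (simp add: power2_eq_square sum_product)
  finally show ?thesis .
qed

lemma trace_unit: "norm u = 1 \<Longrightarrow> trace (proj (vtensor u u)) = 1"
  by (simp add: trace_proj_vt norm_sq[symmetric])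

lemma trace_sum: fixes f :: "'i \<Rightarrow> complex^'n::finite^'n" shows "finite I \<Longrightarrow> trace (\<Sum>i\<in>I. f i) = (\<Sum>i\<in>I. trace (f i))"
  by (induction I rule: finite_induct) (auto simp: trace_add trace_def[of 0])

lemma trace_scaleR: "trace (r *\<^sub>R M) = of_real r * trace (M :: complex^'n::finite^'n)"
  by (simp add: trace_def sum_distrib_left del: scaleR_conv_of_real) (simp add: scaleR_conv_of_real)

lemma trace_msc: "trace (msc c M) = c * trace M"
  by (simp add: trace_def msc_def sum_distrib_left)

lemma trace_Fhat: "finite I \<Longrightarrow> \<forall>i\<in>I. norm (\<phi> i) = 1 \<Longrightarrow> trace (Fhat I \<alpha> \<phi>) = of_real (\<Sum>i\<in>I. \<alpha> i)"
  by (simp add: Fhat_def trace_sum trace_msc trace_unit)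

lemma trace_hull: "x \<in> convex hull {proj (vtensor \<phi>' \<phi>') | \<phi>' :: complex^'a::finite. norm \<phi>' = 1} \<Longrightarrow> trace x = 1"
proof -
  assume x: "x \<in> convex hull {proj (vtensor \<phi>' \<phi>') | \<phi>' :: complex^'a::finite. norm \<phi>' = 1}"
  have "convex hull {proj (vtensor \<phi>' \<phi>') | \<phi>' :: complex^'a::finite. norm \<phi>' = 1} \<subseteq> {y. trace y = 1}"
  proof (rule hull_minimal)
    show "{proj (vtensor \<phi>' \<phi>') | \<phi>' :: complex^'a::finite. norm \<phi>' = 1} \<subseteq> {y. trace y = 1}"
      by (auto simp: trace_unit)
    show "convex {y :: complex^('a \<times> 'a)^('a \<times> 'a). trace y = 1}"
      unfolding convex_def by (auto simp: trace_add trace_scaleR simp flip: of_real_add)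
  qed
  then show ?thesis using x by auto
qed

lemma proj_scale: "proj (vtensor (s *\<^sub>R u) (s *\<^sub>R u)) = (s^4) *\<^sub>R proj (vtensor u (u :: complex^'n::finite))"
  by (simp add: vec_eq_iff proj_def vtensor_def split_beta del: scaleR_conv_of_real)
     (simp add: scaleR_conv_of_real power4_eq_xxxx mult_ac)



lemma P_decomp: "\<exists>\<beta>\<ge>0. \<exists>k\<in>{proj (vtensor \<phi>' \<phi>') | \<phi>' :: complex^'a::finite. norm \<phi>' = 1}.
   proj (vtensor c c) = \<beta> *\<^sub>R k"
proof (cases "c = 0")
  case True
  have "proj (vtensor c c) = 0 *\<^sub>R proj (vtensor (axis undefined 1 :: complex^'a) (axis undefined 1))"
    using True by (simp add: vec_eq_iff proj_def vtensor_def split_beta)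
  moreover have "proj (vtensor (axis undefined 1 :: complex^'a) (axis undefined 1)) \<in> {proj (vtensor \<phi>' \<phi>') | \<phi>' :: complex^'a::finite. norm \<phi>' = 1}"
    using norm_axis_c by blast
  ultimately show ?thesis by blast
next
  case False
  define u where "u = (1 / norm c) *\<^sub>R c"
  have nu: "norm u = 1" using False by (simp add: u_def)
  have cu: "c = norm c *\<^sub>R u" using False by (simp add: u_def)
  have "proj (vtensor c c) = (norm c ^ 4) *\<^sub>R proj (vtensor u u)"
    by (subst cu, subst cu) (rule proj_scale)
  then show ?thesis using nu by (intro exI[of _ "norm c ^ 4"]) auto
qed

theorem mainTheorem13:
  fixes \<psi> :: "complex^('a::finite \<times> 'b::finite)"
    and I :: "'i set" and \<alpha> :: "'i \<Rightarrow> real" and \<phi> :: "'i \<Rightarrow> complex^'b"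
  assumes "norm \<psi> = 1"
    and "finite I"
    and "\<forall>i\<in>I. \<alpha> i > 0"
    and "\<forall>i\<in>I. norm (\<phi> i) = 1"
    and "Re (trace (omega_bar \<psi> I \<alpha> \<phi>)) > 0"
  shows "omega_tilde \<psi> I \<alpha> \<phi> \<in>
           convex hull {proj (vtensor \<phi>' \<phi>') | \<phi>' :: complex^'a. norm \<phi>' = 1}"
proof -
  note fin = assms(2)
  define K where "K = {proj (vtensor \<phi>' \<phi>') | \<phi>' :: complex^'a. norm \<phi>' = 1}"
  define H where "H = convex hull K"
  define Sn where "Sn = msc (1 / trace (symP :: complex^('a \<times> 'a)^('a \<times> 'a))) (symP :: complex^('a \<times> 'a)^('a \<times> 'a))"
  have SnH: "Sn \<in> H" unfolding Sn_def H_def K_def by (rule Sn_hull)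
  have KH: "K \<subseteq> H" unfolding H_def by (rule hull_subset)
  have trH: "trace x = 1" if "x \<in> H" for x using that unfolding H_def K_def by (rule trace_hull)
  have "\<forall>i. \<exists>b k. b \<ge> 0 \<and> k \<in> K \<and> proj (vtensor (chi \<psi> (\<phi> i)) (chi \<psi> (\<phi> i))) = b *\<^sub>R k"
    unfolding K_def using P_decomp by blast
  then obtain \<beta> k where bk: "\<And>i. \<beta> i \<ge> 0" "\<And>i. k i \<in> K"
     "\<And>i. proj (vtensor (chi \<psi> (\<phi> i)) (chi \<psi> (\<phi> i))) = \<beta> i *\<^sub>R k i"
    by metis
  obtain r where r: "r \<ge> 0" "trace (proj (psi2 \<psi>) ** onA asymP ** onB asymP :: complex^(('a,'b) idx4)^(('a,'b) idx4)) = of_real r"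
    using coef_nonneg by blast
  define SA where "SA = (\<Sum>i\<in>I. \<alpha> i)"
  have SA: "SA \<ge> 0" unfolding SA_def using assms(3) by (simp add: sum_nonneg less_imp_le)
  define tB where "tB = real (CARD('b) * CARD('b) + CARD('b)) / 2"
  have trB: "trace (symP :: complex^('b \<times> 'b)^('b \<times> 'b)) = of_real tB"
    by (simp add: trace_symP tB_def)
  have n0: "0 < real CARD('b)" by simp
  have tBpos: "tB > 0" unfolding tB_def using n0 by (simp add: add_pos_pos)
  define \<kappa> where "\<kappa> = r * SA / tB"
  have \<kappa>: "\<kappa> \<ge> 0" unfolding \<kappa>_def using r(1) SA tBpos by simp
  have ob: "omega_bar \<psi> I \<alpha> \<phi> = (\<Sum>i\<in>I. (\<alpha> i * \<beta> i) *\<^sub>R k i) + \<kappa> *\<^sub>R Sn"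
  proof -
    have c: "trace (proj (psi2 \<psi>) ** onA asymP ** onB asymP :: complex^(('a,'b) idx4)^(('a,'b) idx4))
       * trace (Fhat I \<alpha> \<phi>) / trace (symP :: complex^('b \<times> 'b)^('b \<times> 'b)) = of_real \<kappa>"
      unfolding r(2) trace_Fhat[OF fin assms(4)] trB \<kappa>_def SA_def by simp
    show ?thesis
      unfolding omega_bar_def TT_Fhat[OF fin] c msc_scaleR Sn_def[symmetric] bk(3)
      by simp
  qed
  define A where "A = (\<Sum>i\<in>I. \<alpha> i * \<beta> i)"
  have abnn: "\<alpha> i * \<beta> i \<ge> 0" if "i \<in> I" for i using assms(3) bk(1)[of i] that by (simp add: zero_le_mult_iff less_imp_le)
  have A: "A \<ge> 0" unfolding A_def using abnn by (simp add: sum_nonneg)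
  have tr: "trace (omega_bar \<psi> I \<alpha> \<phi>) = of_real (A + \<kappa>)"
    unfolding ob trace_add trace_sum[OF fin] trace_scaleR
    using trH[OF SnH] trH[OF subsetD[OF KH bk(2)]] by (simp add: A_def)
  have pos: "A + \<kappa> > 0" using assms(5) unfolding tr by simp
  define p where "p = (if A > 0 then (\<Sum>i\<in>I. ((\<alpha> i * \<beta> i) / A) *\<^sub>R k i) else Sn)"
  have pH: "p \<in> H"
  proof (cases "A > 0")
    case True
    have "(\<Sum>i\<in>I. ((\<alpha> i * \<beta> i) / A) *\<^sub>R k i) \<in> H"
      unfolding H_def
    proof (rule convex_sum[OF fin convex_convex_hull])
      show "(\<Sum>i\<in>I. \<alpha> i * \<beta> i / A) = 1" using True by (simp add: sum_divide_distrib[symmetric] A_def)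
      show "\<And>i. i \<in> I \<Longrightarrow> 0 \<le> \<alpha> i * \<beta> i / A" using True abnn by simp
      show "\<And>i. i \<in> I \<Longrightarrow> k i \<in> convex hull K" using bk(2) by (simp add: hull_inc)
    qed
    then show ?thesis using True by (simp add: p_def)
  next
    case False
    then show ?thesis using SnH by (simp add: p_def)
  qed
  have W: "(\<Sum>i\<in>I. (\<alpha> i * \<beta> i) *\<^sub>R k i) = A *\<^sub>R p"
  proof (cases "A > 0")
    case True
    then show ?thesis by (simp add: p_def scaleR_sum_right)
  next
    case False
    then have "A = 0" using A by simp
    then have "\<forall>i\<in>I. \<alpha> i * \<beta> i = 0" using abnn fin unfolding A_def by (simp add: sum_nonneg_eq_0_iff)
    then have "(\<Sum>i\<in>I. (\<alpha> i * \<beta> i) *\<^sub>R k i) = (\<Sum>i\<in>I. 0)"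
      by (intro sum.cong) auto
    then show ?thesis using \<open>A = 0\<close> by simp
  qed
  have "omega_tilde \<psi> I \<alpha> \<phi> = (A / (A + \<kappa>)) *\<^sub>R p + (\<kappa> / (A + \<kappa>)) *\<^sub>R Sn"
  proof -
    have "omega_tilde \<psi> I \<alpha> \<phi> = (1 / (A + \<kappa>)) *\<^sub>R (A *\<^sub>R p + \<kappa> *\<^sub>R Sn)"
    proof -
      have "omega_tilde \<psi> I \<alpha> \<phi> = msc (complex_of_real (1 / (A + \<kappa>))) (omega_bar \<psi> I \<alpha> \<phi>)"
        unfolding omega_tilde_def tr by simp
      then show ?thesis unfolding msc_scaleR ob W .
    qed
    then show ?thesis by (simp add: scaleR_add_right)
  qed
  moreover have "(A / (A + \<kappa>)) *\<^sub>R p + (\<kappa> / (A + \<kappa>)) *\<^sub>R Sn \<in> H"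
    by (rule convexD[OF _ pH SnH]) (use A \<kappa> pos in \<open>auto simp: H_def add_divide_distrib[symmetric]\<close>)
  ultimately show ?thesis unfolding H_def K_def by simp
qed

end
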